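(* Let $\mathbf K$ be a commutative field, $p,q\in\mathbb N$, $A\in\mathbf K^{\mathcal M_{p\times q}}$, and $\mathcal A=\overline{A}^{rec}$. Then $$\dim\big(\overline{A}^{birec}\big)=\dim\big(\mathbf K[\rho_{\mathcal A}(\mathcal M_{p\times q})]\big),$$ where $\mathbf K[\rho_{\mathcal A}(\mathcal M_{p\times q})]\subset\mathrm{End}(\mathcal A)$ is the subalgebra generated by the restrictions to $\mathcal A$ of all shift maps. In particular $$\dim\big(\overline{A}^{rec}\big)\le\dim\big(\overline{A}^{birec}\big)\le\big(\dim\overline{A}^{rec}\big)^2$$ (dimensions in $\mathbb N\cup\{\infty\}$).
   Context: $\mathcal M_{p\times q}$ is the monoid of pairs $(U,W)$ of words of common length with $U$ over $\{0,\dots,p-1\}$ and $W$ over $\{0,\dots,q-1\}$, under concatenation. For $A:\mathcal M_{p\times q}\to\mathbf K$ (values $A[U,W]$), the (right) shift map is $(\rho(S,T)A)[U,W]=A[US,WT]$ and the left shift map is $(\lambda(s_1\dots s_n,t_1\dots t_n)A)[U,W]=A[s_n\dots s_1U,t_n\dots t_1W]$. The recursive closure $\overline{A}^{rec}$ is the linear span of $\{\rho(S,T)A\}$ (invariant under all shift maps), and the birecursive closure $\overline{A}^{birec}$ is the linear span of $\{\lambda(S',T')\rho(S,T)A:(S,T),(S',T')\in\mathcal M_{p\times q}\}$. *)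

theory Defs
  imports Main "HOL-Library.Extended_Nat" "HOL-Library.Function_Algebras"
begin

definition Mpq :: "nat \<Rightarrow> nat \<Rightarrow> (nat list \<times> nat list) set" where
  "Mpq p q = {(U, W). length U = length W \<and> set U \<subseteq> {..<p} \<and> set W \<subseteq> {..<q}}"

definition fscale :: "'k::field \<Rightarrow> ('a \<Rightarrow> 'k) \<Rightarrow> ('a \<Rightarrow> 'k)" where
  "fscale c f = (\<lambda>x. c * f x)"

definition mscale :: "'k::field \<Rightarrow> (('a \<Rightarrow> 'k) \<Rightarrow> ('b \<Rightarrow> 'k)) \<Rightarrow> (('a \<Rightarrow> 'k) \<Rightarrow> ('b \<Rightarrow> 'k))" where
  "mscale c \<phi> = (\<lambda>f. fscale c (\<phi> f))"

definition edim :: "('k::field \<Rightarrow> 'v::ab_group_add \<Rightarrow> 'v) \<Rightarrow> 'v set \<Rightarrow> enat" where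
  "edim scale S = (if \<exists>B. finite B \<and> module.span scale B = module.span scale S
                   then enat (vector_space.dim scale S) else \<infinity>)"

definition rshift :: "nat list \<Rightarrow> nat list \<Rightarrow> (nat list \<times> nat list \<Rightarrow> 'k) \<Rightarrow> (nat list \<times> nat list \<Rightarrow> 'k)" where
  "rshift S T A = (\<lambda>(U, W). A (U @ S, W @ T))"

definition lshift :: "nat list \<Rightarrow> nat list \<Rightarrow> (nat list \<times> nat list \<Rightarrow> 'k) \<Rightarrow> (nat list \<times> nat list \<Rightarrow> 'k)" where
  "lshift S T A = (\<lambda>(U, W). A (rev S @ U, rev T @ W))"

definition rec_closure :: "nat \<Rightarrow> nat \<Rightarrow> (nat list \<times> nat list \<Rightarrow> 'k::field) \<Rightarrow> (nat list \<times> nat list \<Rightarrow> 'k) set" where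
  "rec_closure p q A = module.span fscale {rshift S T A | S T. (S, T) \<in> Mpq p q}"

definition birec_closure :: "nat \<Rightarrow> nat \<Rightarrow> (nat list \<times> nat list \<Rightarrow> 'k::field) \<Rightarrow> (nat list \<times> nat list \<Rightarrow> 'k) set" where
  "birec_closure p q A = module.span fscale
     {lshift S' T' (rshift S T A) | S T S' T'. (S, T) \<in> Mpq p q \<and> (S', T') \<in> Mpq p q}"

text \<open>Restriction of a map to a subspace V (as an endomorphism of V; values
outside V are set to 0).\<close>
definition restr :: "('a \<Rightarrow> 'k::field) set \<Rightarrow> (('a \<Rightarrow> 'k) \<Rightarrow> ('a \<Rightarrow> 'k)) \<Rightarrow> (('a \<Rightarrow> 'k) \<Rightarrow> ('a \<Rightarrow> 'k))" where
  "restr V \<phi> = (\<lambda>f. if f \<in> V then \<phi> f else 0)"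

text \<open>Unital subalgebra of End(V) generated by a set G of endomorphisms of V:
the linear span of all finite products of elements of G (the empty product
being the identity of V).\<close>
definition gen_alg :: "('a \<Rightarrow> 'k::field) set \<Rightarrow> (('a \<Rightarrow> 'k) \<Rightarrow> ('a \<Rightarrow> 'k)) set
    \<Rightarrow> (('a \<Rightarrow> 'k) \<Rightarrow> ('a \<Rightarrow> 'k)) set" where
  "gen_alg V G = module.span mscale {foldr (\<circ>) fs (restr V id) | fs. set fs \<subseteq> G}"

definition shift_alg :: "nat \<Rightarrow> nat \<Rightarrow> (nat list \<times> nat list \<Rightarrow> 'k::field) set
    \<Rightarrow> ((nat list \<times> nat list \<Rightarrow> 'k) \<Rightarrow> (nat list \<times> nat list \<Rightarrow> 'k)) set" where
  "shift_alg p q V = gen_alg V {restr V (rshift S T) | S T. (S, T) \<in> Mpq p q}"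

end

theory Submission
  imports Defs
begin


lemma enat_le_by_nat: "(\<And>n. enat n \<le> a \<Longrightarrow> enat n \<le> b) \<Longrightarrow> a \<le> (b::enat)"
  by (metis Suc_ile_eq enat.exhaust linorder_not_less order_refl)

context vector_space begin

lemma edim_ge_iff:
  "enat n \<le> edim scale S \<longleftrightarrow> (\<exists>I\<subseteq>S. independent I \<and> finite I \<and> card I = n)"
proof -
  obtain B where B: "B \<subseteq> S" "independent B" "S \<subseteq> span B"
    using maximal_independent_subset by blast
  have spB: "span B = span S"
    using B by (metis span_span span_eq span_mono)
  show ?thesis
  proof (cases "finite B")
    case True
    have "dim S = card B" using dim_eq_card[OF spB B(2)] .
    then have e: "edim scale S = enat (card B)"
      unfolding edim_def using True spB by auto
    show ?thesis
    proof
      assume "enat n \<le> edim scale S"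
      then have "n \<le> card B" using e by simp
      then obtain I where I: "I \<subseteq> B" "card I = n" by (meson obtain_subset_with_card_n)
      have "independent I" using independent_mono[OF B(2) I(1)] .
      moreover have "finite I" using I(1) True by (rule finite_subset)
      ultimately show "\<exists>I\<subseteq>S. independent I \<and> finite I \<and> card I = n"
        using I B(1) by blast
    next
      assume "\<exists>I\<subseteq>S. independent I \<and> finite I \<and> card I = n"
      then obtain I where "I \<subseteq> S" "independent I" "card I = n" by blast
      then have "n \<le> card B" using independent_span_bound[OF True, of I] B(3) by auto
      then show "enat n \<le> edim scale S" using e by simp
    qed
  next
    case False
    have "\<not> (\<exists>C. finite C \<and> span C = span S)"
    proof
      assume "\<exists>C. finite C \<and> span C = span S"
      then obtain C where C: "finite C" "span C = span S" by blast
      have "B \<subseteq> span C" using C(2) spB span_superset by blast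
      then have "finite B" using independent_span_bound[OF C(1) B(2)] by blast
      then show False using False by simp
    qed
    then have e: "edim scale S = \<infinity>" unfolding edim_def by auto
    obtain I where I: "I \<subseteq> B" "finite I" "card I = n"
      using False infinite_arbitrarily_large by blast
    have "independent I" using independent_mono[OF B(2) I(1)] .
    then show ?thesis using e I B(1) by auto
  qed
qed

lemma edim_span: "edim scale (span S) = edim scale S"
  unfolding edim_def by (simp add: span_span)

lemma edim_mono: assumes "S \<subseteq> span T" shows "edim scale S \<le> edim scale T"
proof (rule enat_le_by_nat)
  fix n assume "enat n \<le> edim scale S"
  then obtain I where I: "I \<subseteq> S" "independent I" "finite I" "card I = n" using edim_ge_iff by blast
  then have "I \<subseteq> span T" using assms by blast
  then have "enat n \<le> edim scale (span T)" using I edim_ge_iff[of n "span T"] by blast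
  then show "enat n \<le> edim scale T" by (simp add: edim_span)
qed

lemma edim_le_card: assumes "S \<subseteq> span D" "finite D" shows "edim scale S \<le> enat (card D)"
proof (rule enat_le_by_nat)
  fix n assume "enat n \<le> edim scale S"
  then obtain I where I: "I \<subseteq> S" "independent I" "finite I" "card I = n" using edim_ge_iff by blast
  have "I \<subseteq> span D" using I(1) assms(1) by blast
  then show "enat n \<le> enat (card D)" using independent_span_bound[OF assms(2) I(2)] I(4) by auto
qed

lemma edim_le_obtain: assumes "edim scale S \<le> enat k"
  obtains D where "D \<subseteq> S" "finite D" "card D \<le> k" "S \<subseteq> span D" "independent D"
proof -
  obtain B where B: "B \<subseteq> S" "independent B" "S \<subseteq> span B"
    using maximal_independent_subset by blast
  have fin: "finite B"
  proof (rule ccontr)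
    assume "infinite B"
    then obtain I where I: "I \<subseteq> B" "finite I" "card I = Suc k"
      using infinite_arbitrarily_large by blast
    have "independent I" using independent_mono[OF B(2) I(1)] .
    then have "enat (Suc k) \<le> edim scale S" using B(1) I edim_ge_iff[of "Suc k" S] by blast
    then show False using order_trans[OF _ assms] by fastforce
  qed
  have "enat (card B) \<le> edim scale S"
    using edim_ge_iff[of "card B" S] B fin by blast
  then have "card B \<le> k" using order_trans[OF _ assms] by fastforce
  then show ?thesis using that B fin by blast
qed

end

lemma sum_fun_apply: "(\<Sum>a\<in>A. f a) x = (\<Sum>a\<in>A. f a x)"
  by (induct A rule: infinite_finite_induct) auto

lemma indep_from_image:
  assumes L: "module_hom s1 s2 L" and ind: "\<not> module.dependent s2 (L ` I)" and inj: "inj_on L I"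
  shows "\<not> module.dependent s1 I"
proof -
  interpret L: module_hom s1 s2 L by (rule L)
  show ?thesis unfolding L.m1.independent_explicit_module
  proof (intro allI impI)
    fix t u v assume t: "finite t" "t \<subseteq> I" "(\<Sum>v\<in>t. s1 (u v) v) = 0" "v \<in> t"
    have injt: "inj_on L t" using inj t(2) inj_on_subset by blast
    define w where "w = (\<lambda>y. u (the_inv_into t L y))"
    have "L (\<Sum>v\<in>t. s1 (u v) v) = (\<Sum>v\<in>t. s2 (u v) (L v))" by (simp add: L.sum L.scale)
    also have "\<dots> = (\<Sum>y\<in>L ` t. s2 (w y) y)"
      using injt by (simp add: sum.reindex w_def the_inv_into_f_f)
    finally have "(\<Sum>y\<in>L ` t. s2 (w y) y) = 0" using t(3) by simp
    then have "w (L v) = 0"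
      using ind[unfolded L.m2.independent_explicit_module] t by blast
    then show "u v = 0" using injt t(4) by (simp add: w_def the_inv_into_f_f)
  qed
qed

lemma edim_transfer:
  assumes L: "module_hom s1 s2 L" and v1: "vector_space s1" and v2: "vector_space s2"
    and inj: "inj_on L (module.span s1 S)"
  shows "edim s1 S = edim s2 (L ` S)"
proof -
  interpret L: module_hom s1 s2 L by (rule L)
  interpret v1: vector_space s1 by (rule v1)
  interpret v2: vector_space s2 by (rule v2)
  have "enat n \<le> edim s1 S \<longleftrightarrow> enat n \<le> edim s2 (L ` S)" for n
  proof
    assume "enat n \<le> edim s1 S"
    then obtain I where I: "I \<subseteq> S" "\<not> module.dependent s1 I" "finite I" "card I = n"
      using v1.edim_ge_iff by blast
    have injI: "inj_on L (module.span s1 I)" using inj L.m1.span_mono[OF I(1)] inj_on_subset by blast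
    have "\<not> module.dependent s2 (L ` I)" using L.independent_injective_image[OF I(2) injI] .
    moreover have "inj_on L I" using injI L.m1.span_superset inj_on_subset by blast
    then have "card (L ` I) = n" using I(4) card_image by blast
    moreover have "L ` I \<subseteq> L ` S" using I(1) by blast
    ultimately show "enat n \<le> edim s2 (L ` S)" using I(3) v2.edim_ge_iff by blast
  next
    assume "enat n \<le> edim s2 (L ` S)"
    then obtain J where J: "J \<subseteq> L ` S" "\<not> module.dependent s2 J" "finite J" "card J = n"
      using v2.edim_ge_iff by blast
    then obtain I where I: "I \<subseteq> S" "inj_on L I" "J = L ` I" by (meson subset_image_inj)
    have injI: "inj_on L (module.span s1 I)" using inj L.m1.span_mono[OF I(1)] inj_on_subset by blast
    have "\<not> module.dependent s1 I" using indep_from_image[OF L] J(2) I(2,3) by blast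
    moreover have "finite I" using J(3) I(2,3) finite_image_iff by blast
    moreover have "card I = n" using J(4) I(2,3) card_image by metis
    ultimately show "enat n \<le> edim s1 S" using I v1.edim_ge_iff by blast
  qed
  then show ?thesis by (meson antisym enat_le_by_nat)
qed


lemma vs_fscale: "vector_space (fscale :: 'k::field \<Rightarrow> ('a \<Rightarrow> 'k) \<Rightarrow> _)"
  unfolding vector_space_def module_def fscale_def
  by (auto simp: fun_eq_iff algebra_simps)

lemma vs_mscale: "vector_space (mscale :: 'k::field \<Rightarrow> (('a \<Rightarrow> 'k) \<Rightarrow> ('b \<Rightarrow> 'k)) \<Rightarrow> _)"
  unfolding vector_space_def module_def mscale_def fscale_def
  by (auto simp: fun_eq_iff algebra_simps)

interpretation fs: vector_space "fscale :: 'k::field \<Rightarrow> ('a \<Rightarrow> 'k) \<Rightarrow> ('a \<Rightarrow> 'k)"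
  by (rule vs_fscale)

interpretation ms: vector_space "mscale :: 'k::field \<Rightarrow> (('a \<Rightarrow> 'k) \<Rightarrow> ('b \<Rightarrow> 'k)) \<Rightarrow> _"
  by (rule vs_mscale)

lemma rank_half:
  fixes M :: "'r \<Rightarrow> 'c \<Rightarrow> 'k::field"
  assumes van: "\<And>r c. r \<notin> R \<or> c \<notin> C \<Longrightarrow> M r c = 0"
  and I: "I \<subseteq> M ` R" "fs.independent I" "finite I" "card I = n"
  shows "\<exists>J \<subseteq> (\<lambda>c r. M r c) ` C. fs.independent J \<and> finite J \<and> card J = n"
proof -
  obtain R0 where R0: "R0 \<subseteq> R" "inj_on M R0" "I = M ` R0"
    using I(1) by (meson subset_image_inj)
  have finR0: "finite R0" using R0 I(3) finite_image_iff by blast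
  define P where "P = (\<lambda>(f::'r\<Rightarrow>'k). \<lambda>r. if r \<in> R0 then f r else 0)"
  have Phom: "module_hom fscale fscale P"
    unfolding module_hom_iff
  proof (intro conjI allI)
    show "module (fscale :: 'k \<Rightarrow> ('r\<Rightarrow>'k) \<Rightarrow> _)" using vs_fscale module_iff_vector_space by blast
    then show "module (fscale :: 'k \<Rightarrow> ('r\<Rightarrow>'k) \<Rightarrow> _)" .
    show "P (x + y) = P x + P y" for x y by (auto simp: P_def fun_eq_iff)
    show "P (fscale c x) = fscale c (P x)" for c x by (auto simp: P_def fscale_def fun_eq_iff)
  qed
  define col where "col c = (\<lambda>r. M r c)" for c
  define C0 where "C0 = (\<lambda>c. P (col c)) ` C"
  define \<delta> where "\<delta> (r0::'r) = (\<lambda>r::'r. if r = r0 then (1::'k) else 0)" for r0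
  have Pexp: "P g = (\<Sum>r0\<in>R0. fscale (g r0) (\<delta> r0))" for g
    using finR0 by (auto simp: fun_eq_iff sum_fun_apply P_def fscale_def \<delta>_def if_distrib cong: if_cong)
  have C0span: "C0 \<subseteq> fs.span (\<delta> ` R0)"
  proof
    fix f assume "f \<in> C0"
    then obtain c where "f = P (col c)" unfolding C0_def by blast
    have "P (col c) \<in> fs.span (\<delta> ` R0)"
      unfolding Pexp by (rule fs.span_sum, rule fs.span_scale, rule fs.span_base) auto
    then show "f \<in> fs.span (\<delta> ` R0)" using \<open>f = P (col c)\<close> by simp
  qed
  obtain B where B: "B \<subseteq> C0" "fs.independent B" "C0 \<subseteq> fs.span B"
    using fs.maximal_independent_subset by blast
  have finB: "finite B"
    using fs.independent_span_bound[OF _ B(2), of "\<delta> ` R0"] finR0 B(1) C0span by blast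
  have "\<forall>c\<in>C. \<exists>u. P (col c) = (\<Sum>v\<in>B. fscale (u v) v)"
  proof
    fix c assume "c \<in> C"
    then have "P (col c) \<in> fs.span B" using B(3) unfolding C0_def by blast
    then show "\<exists>u. P (col c) = (\<Sum>v\<in>B. fscale (u v) v)"
      unfolding fs.span_finite[OF finB] by blast
  qed
  then obtain u where u: "\<And>c. c \<in> C \<Longrightarrow> P (col c) = (\<Sum>v\<in>B. fscale (u c v) v)"
    by metis
  define a where "a v = (\<lambda>c. if c \<in> C then u c v else 0)" for v
  have rows: "M r = (\<Sum>v\<in>B. fscale (v r) (a v))" if r: "r \<in> R0" for r
  proof (rule ext)
    fix c
    show "M r c = (\<Sum>v\<in>B. fscale (v r) (a v)) c"
    proof (cases "c \<in> C")
      case True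
      have "M r c = P (col c) r" using r by (simp add: P_def col_def)
      also have "\<dots> = (\<Sum>v\<in>B. u c v * v r)" using u[OF True] by (simp add: sum_fun_apply fscale_def)
      also have "\<dots> = (\<Sum>v\<in>B. fscale (v r) (a v)) c"
        using True by (simp add: sum_fun_apply fscale_def a_def mult.commute)
      finally show ?thesis .
    next
      case False
      then show ?thesis using van by (simp add: sum_fun_apply fscale_def a_def)
    qed
  qed
  have "I \<subseteq> fs.span (a ` B)"
  proof
    fix x assume "x \<in> I"
    then obtain r where r: "r \<in> R0" "x = M r" using R0 by blast
    show "x \<in> fs.span (a ` B)" unfolding r(2) rows[OF r(1)]
      by (rule fs.span_sum, rule fs.span_scale, rule fs.span_base) auto
  qed
  then have "n \<le> card (a ` B)" using fs.independent_span_bound[OF _ I(2)] finB I(4) by blast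
  also have "\<dots> \<le> card B" using finB card_image_le by blast
  finally obtain B' where B': "B' \<subseteq> B" "card B' = n" by (meson obtain_subset_with_card_n)
  have "\<forall>b\<in>B'. \<exists>c. c \<in> C \<and> b = P (col c)" using B'(1) B(1) unfolding C0_def by blast
  then obtain g where g: "\<And>b. b \<in> B' \<Longrightarrow> g b \<in> C \<and> b = P (col (g b))" by metis
  define J where "J = (\<lambda>b. col (g b)) ` B'"
  have Jsub: "J \<subseteq> (\<lambda>c r. M r c) ` C" using g unfolding J_def col_def by blast
  have inj1: "inj_on (\<lambda>b. col (g b)) B'"
  proof (rule inj_onI)
    fix b1 b2 assume "b1 \<in> B'" "b2 \<in> B'" "col (g b1) = col (g b2)"
    then show "b1 = b2" using g[of b1] g[of b2] by simp
  qed
  have PJ: "P ` J = B'"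
  proof -
    have "P ` J = (\<lambda>b. P (col (g b))) ` B'" unfolding J_def image_image ..
    also have "\<dots> = (\<lambda>b. b) ` B'" using g by (intro image_cong) auto
    finally show ?thesis by simp
  qed
  have injP: "inj_on P J"
  proof (rule inj_onI)
    fix x y assume "x \<in> J" "y \<in> J" "P x = P y"
    then obtain b1 b2 where "b1 \<in> B'" "b2 \<in> B'" "x = col (g b1)" "y = col (g b2)"
      unfolding J_def by blast
    then show "x = y" using g[of b1] g[of b2] \<open>P x = P y\<close> by simp
  qed
  have "fs.independent B'" using fs.independent_mono[OF B(2)] B'(1) by blast
  then have "fs.independent J" using indep_from_image[OF Phom, of J] PJ injP by simp
  moreover have "finite J" "card J = n"
    using B'(1) finB inj1 B'(2) unfolding J_def by (auto intro: finite_subset simp: card_image)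
  ultimately show ?thesis using Jsub by blast
qed

lemma rank_eq:
  fixes M :: "'r \<Rightarrow> 'c \<Rightarrow> 'k::field"
  assumes van: "\<And>r c. r \<notin> R \<or> c \<notin> C \<Longrightarrow> M r c = 0"
  shows "edim fscale (M ` R) = edim fscale ((\<lambda>c r. M r c) ` C)"
proof (rule antisym; rule enat_le_by_nat)
  fix n assume "enat n \<le> edim fscale (M ` R)"
  then obtain I where "I \<subseteq> M ` R" "fs.independent I" "finite I" "card I = n"
    using fs.edim_ge_iff by blast
  then have "\<exists>J \<subseteq> (\<lambda>c r. M r c) ` C. fs.independent J \<and> finite J \<and> card J = n"
    using rank_half[where M=M and R=R and C=C, OF van] by blast
  then show "enat n \<le> edim fscale ((\<lambda>c r. M r c) ` C)"
    using fs.edim_ge_iff by blast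
next
  fix n assume "enat n \<le> edim fscale ((\<lambda>c r. M r c) ` C)"
  then obtain I where I: "I \<subseteq> (\<lambda>c r. M r c) ` C" "fs.independent I" "finite I" "card I = n"
    using fs.edim_ge_iff by blast
  have van': "\<And>c r. c \<notin> C \<or> r \<notin> R \<Longrightarrow> (\<lambda>c r. M r c) c r = 0" using van by blast
  from rank_half[OF van' I] have "\<exists>J\<subseteq>M ` R. fs.independent J \<and> finite J \<and> card J = n"
    by simp
  then show "enat n \<le> edim fscale (M ` R)" using fs.edim_ge_iff by blast
qed



type_synonym pr = "nat list \<times> nat list"

lemma Mpq_appI: "(a1,a2)\<in>Mpq p q \<Longrightarrow> (b1,b2)\<in>Mpq p q \<Longrightarrow> (a1@b1,a2@b2) \<in> Mpq p q"
  by (auto simp: Mpq_def)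
lemma Mpq_appD1: "(a1@b1,a2@b2)\<in>Mpq p q \<Longrightarrow> (b1,b2)\<in>Mpq p q \<Longrightarrow> (a1,a2)\<in>Mpq p q"
  by (auto simp: Mpq_def)
lemma Mpq_appD2: "(a1@b1,a2@b2)\<in>Mpq p q \<Longrightarrow> (a1,a2)\<in>Mpq p q \<Longrightarrow> (b1,b2)\<in>Mpq p q"
  by (auto simp: Mpq_def)
lemma Mpq_rev: "(rev a, rev b) \<in> Mpq p q \<longleftrightarrow> (a,b)\<in>Mpq p q"
  by (auto simp: Mpq_def)
lemma Mpq_Nil: "([],[])\<in>Mpq p q"
  by (auto simp: Mpq_def)
lemma Mpq_3: "(x1@u1@s1, x2@u2@s2) \<in> Mpq p q \<Longrightarrow> (s1,s2)\<in>Mpq p q \<Longrightarrow>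
   (x1,x2)\<in>Mpq p q \<Longrightarrow> (u1,u2)\<in>Mpq p q"
  by (auto simp: Mpq_def)
lemma Mpq_3': "(x1@u1@s1, x2@u2@s2) \<in> Mpq p q \<Longrightarrow> (s1,s2)\<in>Mpq p q \<Longrightarrow>
   (u1,u2)\<in>Mpq p q \<Longrightarrow> (x1,x2)\<in>Mpq p q"
  by (auto simp: Mpq_def)

lemma rshift_apply: "rshift S T f (U,W) = f (U@S, W@T)"
  by (simp add: rshift_def)
lemma lshift_apply: "lshift S T f (U,W) = f (rev S @ U, rev T @ W)"
  by (simp add: lshift_def)
lemma rshift_rshift: "rshift S T (rshift S' T' f) = rshift (S@S') (T@T') f"
  by (auto simp: rshift_def fun_eq_iff)
lemma rshift_Nil: "rshift [] [] f = f"
  by (auto simp: rshift_def fun_eq_iff)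
lemma lshift_Nil: "lshift [] [] f = f"
  by (auto simp: lshift_def fun_eq_iff)

lemma module_fscale: "module (fscale :: 'k::field \<Rightarrow> ('a \<Rightarrow> 'k) \<Rightarrow> _)"
  using vs_fscale module_iff_vector_space by blast
lemma module_mscale: "module (mscale :: 'k::field \<Rightarrow> (('a \<Rightarrow> 'k) \<Rightarrow> ('b \<Rightarrow> 'k)) \<Rightarrow> _)"
  using vs_mscale module_iff_vector_space by blast

lemma rshift_hom: "module_hom fscale fscale (rshift S T :: (pr \<Rightarrow> 'k::field) \<Rightarrow> _)"
  unfolding module_hom_iff
  by (auto simp: module_fscale rshift_def fscale_def fun_eq_iff)
lemma lshift_hom: "module_hom fscale fscale (lshift S T :: (pr \<Rightarrow> 'k::field) \<Rightarrow> _)"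
  unfolding module_hom_iff
  by (auto simp: module_fscale lshift_def fscale_def fun_eq_iff)

lemma rshift_zero: "rshift S T 0 = 0"
  by (auto simp: rshift_def fun_eq_iff)

lemma rec_closure_eq: "rec_closure p q A = fs.span ((\<lambda>(S,T). rshift S T A) ` Mpq p q)"
proof -
  have "{rshift S T A | S T. (S, T) \<in> Mpq p q} = (\<lambda>(S,T). rshift S T A) ` Mpq p q" by force
  then show ?thesis unfolding rec_closure_def by simp
qed

context
  fixes p q :: nat and A :: "pr \<Rightarrow> 'k::field"
  assumes hA: "\<forall>x. x \<notin> Mpq p q \<longrightarrow> A x = 0"
begin

lemma V_van: assumes "f \<in> rec_closure p q A" "(x1,x2) \<notin> Mpq p q" shows "f (x1,x2) = 0"
  using assms(1) unfolding rec_closure_eq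
proof (induct rule: fs.span_induct_alt)
  case base then show ?case by simp
next
  case (step c x y)
  then obtain S T where "(S,T) \<in> Mpq p q" "x = rshift S T A" by auto
  then have "x (x1,x2) = 0" using hA assms(2) Mpq_appD1[of x1 S x2 T p q]
    by (auto simp: rshift_apply)
  then show ?case using step by (simp add: fscale_def)
qed

lemma G_in_V: "(S,T) \<in> Mpq p q \<Longrightarrow> rshift S T A \<in> rec_closure p q A"
  unfolding rec_closure_eq by (rule fs.span_base) force

lemma V_rshift: assumes "f \<in> rec_closure p q A" "(S,T) \<in> Mpq p q"
  shows "rshift S T f \<in> rec_closure p q A"
proof -
  interpret h: module_hom fscale fscale "rshift S T :: (pr \<Rightarrow> 'k) \<Rightarrow> _" by (rule rshift_hom)
  have "rshift S T ` (\<lambda>(S,T). rshift S T A) ` Mpq p q \<subseteq> (\<lambda>(S,T). rshift S T A) ` Mpq p q"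
  proof
    fix g assume "g \<in> rshift S T ` (\<lambda>(S,T). rshift S T A) ` Mpq p q"
    then obtain S' T' where "(S',T') \<in> Mpq p q" "g = rshift (S@S') (T@T') A"
      by (auto simp: rshift_rshift)
    then show "g \<in> (\<lambda>(S,T). rshift S T A) ` Mpq p q"
      using Mpq_appI[OF assms(2)] by force
  qed
  then have "fs.span (rshift S T ` (\<lambda>(S,T). rshift S T A) ` Mpq p q) \<subseteq> rec_closure p q A"
    unfolding rec_closure_eq by (rule fs.span_mono)
  then show ?thesis using assms(1) unfolding rec_closure_eq h.span_image by blast
qed

end


definition Lmap :: "nat \<Rightarrow> nat \<Rightarrow> (pr \<Rightarrow> 'k::field) \<Rightarrow> ((pr \<Rightarrow> 'k) \<Rightarrow> (pr \<Rightarrow> 'k)) \<Rightarrow> (pr \<times> pr \<Rightarrow> 'k)" where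
  "Lmap p q A \<phi> = (\<lambda>(X,S). if S \<in> Mpq p q then \<phi> (rshift (fst S) (snd S) A) X else 0)"

definition Mat :: "nat \<Rightarrow> nat \<Rightarrow> (pr \<Rightarrow> 'k::field) \<Rightarrow> pr \<times> pr \<Rightarrow> pr \<Rightarrow> 'k" where
  "Mat p q A = (\<lambda>(X,S) U. if X \<in> Mpq p q \<and> S \<in> Mpq p q \<and> U \<in> Mpq p q
      then A (fst X @ fst U @ fst S, snd X @ snd U @ snd S) else 0)"

definition good :: "(pr \<Rightarrow> 'k::field) set \<Rightarrow> ((pr \<Rightarrow> 'k) \<Rightarrow> (pr \<Rightarrow> 'k)) \<Rightarrow> bool" where
  "good V \<phi> \<longleftrightarrow> (\<forall>f. f \<notin> V \<longrightarrow> \<phi> f = 0) \<and> (\<forall>f\<in>V. \<forall>g\<in>V. \<phi> (f + g) = \<phi> f + \<phi> g)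
     \<and> (\<forall>c. \<forall>f\<in>V. \<phi> (fscale c f) = fscale c (\<phi> f))"

lemma Lmap_hom: "module_hom mscale fscale (Lmap p q A)"
  unfolding module_hom_iff
  by (auto simp: module_fscale module_mscale Lmap_def mscale_def fscale_def fun_eq_iff)

lemma good_restr: assumes "fs.subspace V" "module_hom fscale fscale h" shows "good V (restr V h)"
proof -
  interpret h: module_hom fscale fscale h by fact
  show ?thesis using assms(1)
    by (auto simp: good_def restr_def h.add h.scale fs.subspace_add fs.subspace_scale)
qed

lemma good_comb: assumes "good V x" "good V y" shows "good V (mscale c x + y)"
  using assms unfolding good_def
  by (auto simp: mscale_def fscale_def fun_eq_iff algebra_simps)

lemma good_zero: "good V 0"
  by (auto simp: good_def fscale_def fun_eq_iff)

context
  fixes p q :: nat and A :: "pr \<Rightarrow> 'k::field"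
  assumes hA: "\<forall>x. x \<notin> Mpq p q \<longrightarrow> A x = 0"
begin

abbreviation "V \<equiv> rec_closure p q A"
abbreviation "Gs \<equiv> (\<lambda>(S,T). restr V (rshift S T)) ` Mpq p q"

lemma V_sub: "fs.subspace V"
  unfolding rec_closure_def by (rule fs.subspace_span)

lemma restr_comp: assumes "(S',T') \<in> Mpq p q"
  shows "restr V (rshift S T) \<circ> restr V (rshift S' T') = restr V (rshift (S@S') (T@T'))"
  using V_rshift[OF hA _ assms]
  by (auto simp: restr_def fun_eq_iff rshift_rshift rshift_zero)

lemma restr_id: "restr V id = restr V (rshift [] [])"
proof -
  have h: "rshift [] [] = (id :: (pr \<Rightarrow> 'k) \<Rightarrow> _)" by (rule ext) (simp add: rshift_Nil)
  show ?thesis unfolding h ..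
qed

lemma gens_eq: "{foldr (\<circ>) fs (restr V id) | fs. set fs \<subseteq> {restr V (rshift S T) | S T. (S, T) \<in> Mpq p q}} = Gs"
proof
  have imgD: "\<And>z. z \<in> Gs \<Longrightarrow> \<exists>S T. (S,T) \<in> Mpq p q \<and> z = restr V (rshift S T)" by auto
  have gen: "z0 \<in> Gs \<Longrightarrow> set fs \<subseteq> Gs \<longrightarrow> foldr (\<circ>) fs z0 \<in> Gs" for fs z0
  proof (induct fs)
    case Nil
    then show ?case by simp
  next
    case (Cons x fs)
    show ?case
    proof
      assume a: "set (x # fs) \<subseteq> Gs"
      then have "set fs \<subseteq> Gs" by simp
      then have "foldr (\<circ>) fs z0 \<in> Gs" using Cons.hyps Cons.prems by blast
      then obtain S' T' where st': "(S',T') \<in> Mpq p q" "foldr (\<circ>) fs z0 = restr V (rshift S' T')"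
        using imgD by blast
      have "x \<in> Gs" using a by simp
      then obtain S T where st: "(S,T) \<in> Mpq p q" "x = restr V (rshift S T)" using imgD by blast
      have "foldr (\<circ>) (x # fs) z0 = x \<circ> foldr (\<circ>) fs z0" by simp
      also have "\<dots> = restr V (rshift (S@S') (T@T'))"
        unfolding st(2) st'(2) by (rule restr_comp[OF st'(1)])
      finally show "foldr (\<circ>) (x # fs) z0 \<in> Gs" using Mpq_appI[OF st(1) st'(1)] by force
    qed
  qed
  have "restr V id \<in> Gs" unfolding restr_id using Mpq_Nil[of p q] by (rule rev_image_eqI) simp
  then have "set fs \<subseteq> Gs \<longrightarrow> foldr (\<circ>) fs (restr V id) \<in> Gs" for fs using gen by blast
  moreover have "{restr V (rshift S T) | S T. (S, T) \<in> Mpq p q} = Gs" by force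
  ultimately show "{foldr (\<circ>) fs (restr V id) | fs. set fs \<subseteq> {restr V (rshift S T) | S T. (S, T) \<in> Mpq p q}} \<subseteq> Gs"
    by auto
next
  show "Gs \<subseteq> {foldr (\<circ>) fs (restr V id) | fs. set fs \<subseteq> {restr V (rshift S T) | S T. (S, T) \<in> Mpq p q}}"
  proof
    fix g assume "g \<in> Gs"
    then obtain S T where st: "(S,T) \<in> Mpq p q" "g = restr V (rshift S T)" by auto
    have "g = foldr (\<circ>) [restr V (rshift S T)] (restr V id)"
      using restr_comp[OF Mpq_Nil, of S T] st by (simp add: restr_id)
    moreover have "set [restr V (rshift S T)] \<subseteq> {restr V (rshift S T) | S T. (S, T) \<in> Mpq p q}"
      using st(1) by auto
    ultimately show "g \<in> {foldr (\<circ>) fs (restr V id) | fs. set fs \<subseteq> {restr V (rshift S T) | S T. (S, T) \<in> Mpq p q}}"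
      by blast
  qed
qed

lemma shift_alg_eq: "shift_alg p q V = ms.span Gs"
  unfolding shift_alg_def gen_alg_def gens_eq ..

lemma span_Gs_good: "\<phi> \<in> ms.span Gs \<Longrightarrow> good V \<phi>"
proof (induct rule: ms.span_induct_alt)
  case base then show ?case by (rule good_zero)
next
  case (step c x y)
  then have "good V x" using good_restr[OF V_sub rshift_hom] by auto
  then show ?case using step good_comb by blast
qed

lemma Lmap_inj: "inj_on (Lmap p q A) (ms.span Gs)"
proof -
  interpret Lh: module_hom mscale fscale "Lmap p q A" by (rule Lmap_hom)
  show ?thesis unfolding Lh.inj_on_iff_eq_0[OF ms.subspace_span]
  proof (intro ballI impI)
    fix \<phi> assume \<phi>: "\<phi> \<in> ms.span Gs" and L0: "Lmap p q A \<phi> = 0"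
    have g: "good V \<phi>" by (rule span_Gs_good[OF \<phi>])
    have phi0: "\<phi> 0 = 0"
    proof -
      have "\<phi> (0 + 0) = \<phi> 0 + \<phi> 0" using g fs.subspace_0[OF V_sub] unfolding good_def by blast
      then show ?thesis by simp
    qed
    have gen0: "\<phi> (rshift S T A) = 0" if "(S,T) \<in> Mpq p q" for S T
    proof
      fix X
      have "Lmap p q A \<phi> (X, (S,T)) = 0" using L0 by simp
      then show "\<phi> (rshift S T A) X = 0 X" using that by (simp add: Lmap_def)
    qed
    have gout: "\<And>f. f \<notin> V \<Longrightarrow> \<phi> f = 0" using g unfolding good_def by blast
    have gadd: "\<And>f h. f \<in> V \<Longrightarrow> h \<in> V \<Longrightarrow> \<phi> (f + h) = \<phi> f + \<phi> h"
      using g unfolding good_def by blast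
    have gscl: "\<And>c f. f \<in> V \<Longrightarrow> \<phi> (fscale c f) = fscale c (\<phi> f)"
      using g unfolding good_def by blast
    have ind: "f \<in> V \<and> \<phi> f = 0" if "f \<in> fs.span ((\<lambda>(S,T). rshift S T A) ` Mpq p q)" for f
      using that
    proof (induct rule: fs.span_induct_alt)
      case base show ?case using phi0 fs.subspace_0[OF V_sub] by blast
    next
      case (step c x y)
      then obtain S T where st: "(S,T) \<in> Mpq p q" "x = rshift S T A" by auto
      have yV: "y \<in> V" and y0: "\<phi> y = 0" using step(2) by auto
      have xV: "x \<in> V" using G_in_V[OF hA st(1)] st(2) by simp
      have cxV: "fscale c x \<in> V" using fs.subspace_scale[OF V_sub xV] .
      have "\<phi> (fscale c x + y) = \<phi> (fscale c x) + \<phi> y" using gadd[OF cxV yV] .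
      also have "\<dots> = fscale c (\<phi> x)" using gscl[OF xV] y0 by simp
      also have "\<dots> = 0" unfolding st(2) gen0[OF st(1)] by (simp add: fscale_def fun_eq_iff)
      finally show ?case using fs.subspace_add[OF V_sub cxV yV] by blast
    qed
    have "\<phi> f = 0" for f
    proof (cases "f \<in> V")
      case True then show ?thesis using ind[of f] unfolding rec_closure_eq by simp
    next
      case False then show ?thesis using gout by simp
    qed
    then show "\<phi> = 0" by (simp add: fun_eq_iff)
  qed
qed

lemma Mat_row: assumes "(X1,X2) \<in> Mpq p q" "(S1,S2) \<in> Mpq p q"
  shows "Mat p q A ((X1,X2),(S1,S2)) = lshift (rev X1) (rev X2) (rshift S1 S2 A)"
proof (rule ext)
  fix U show "Mat p q A ((X1,X2),(S1,S2)) U = lshift (rev X1) (rev X2) (rshift S1 S2 A) U"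
    using assms hA Mpq_3[of X1 "fst U" S1 X2 "snd U" S2 p q]
    by (cases U) (auto simp: Mat_def lshift_apply rshift_apply)
qed

lemma Mat_col: assumes "(U1,U2) \<in> Mpq p q"
  shows "(\<lambda>r. Mat p q A r (U1,U2)) = Lmap p q A (restr V (rshift U1 U2))"
proof (rule ext)
  fix r :: "pr \<times> pr"
  obtain X1 X2 S1 S2 where r: "r = ((X1,X2),(S1,S2))" by (metis prod.exhaust)
  show "Mat p q A r (U1,U2) = Lmap p q A (restr V (rshift U1 U2)) r"
    using assms hA Mpq_3'[of X1 U1 S1 X2 U2 S2 p q] G_in_V[OF hA, of S1 S2]
    by (auto simp: r Mat_def Lmap_def restr_def rshift_apply)
qed

lemma birec_eq: "birec_closure p q A = fs.span (Mat p q A ` (Mpq p q \<times> Mpq p q))"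
proof -
  have "{lshift S' T' (rshift S T A) | S T S' T'. (S, T) \<in> Mpq p q \<and> (S', T') \<in> Mpq p q}
      = Mat p q A ` (Mpq p q \<times> Mpq p q)"
  proof
    show "{lshift S' T' (rshift S T A) | S T S' T'. (S, T) \<in> Mpq p q \<and> (S', T') \<in> Mpq p q}
      \<subseteq> Mat p q A ` (Mpq p q \<times> Mpq p q)"
    proof
      fix g assume "g \<in> {lshift S' T' (rshift S T A) | S T S' T'. (S, T) \<in> Mpq p q \<and> (S', T') \<in> Mpq p q}"
      then obtain S T S' T' where st: "(S, T) \<in> Mpq p q" "(S', T') \<in> Mpq p q" "g = lshift S' T' (rshift S T A)"
        by blast
      have r: "(rev S', rev T') \<in> Mpq p q" using st(2) Mpq_rev by blast
      have "g = Mat p q A ((rev S', rev T'), (S,T))" using Mat_row[OF r st(1)] st(3) by simp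
      then show "g \<in> Mat p q A ` (Mpq p q \<times> Mpq p q)" using r st(1) by blast
    qed
  next
    show "Mat p q A ` (Mpq p q \<times> Mpq p q) \<subseteq>
      {lshift S' T' (rshift S T A) | S T S' T'. (S, T) \<in> Mpq p q \<and> (S', T') \<in> Mpq p q}"
    proof
      fix g assume "g \<in> Mat p q A ` (Mpq p q \<times> Mpq p q)"
      then obtain X1 X2 S1 S2 where st: "(X1,X2) \<in> Mpq p q" "(S1,S2) \<in> Mpq p q" "g = Mat p q A ((X1,X2),(S1,S2))"
        by auto
      have r: "(rev X1, rev X2) \<in> Mpq p q" using st(1) Mpq_rev by simp
      show "g \<in> {lshift S' T' (rshift S T A) | S T S' T'. (S, T) \<in> Mpq p q \<and> (S', T') \<in> Mpq p q}"
        using Mat_row[OF st(1,2)] st(2,3) r by blast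
    qed
  qed
  then show ?thesis unfolding birec_closure_def by simp
qed

lemma cols_eq: "(\<lambda>c r. Mat p q A r c) ` Mpq p q = Lmap p q A ` Gs"
proof -
  have "Lmap p q A ` Gs = (\<lambda>(U1,U2). Lmap p q A (restr V (rshift U1 U2))) ` Mpq p q"
    by (auto simp: image_image split_def)
  also have "\<dots> = (\<lambda>c r. Mat p q A r c) ` Mpq p q"
    by (rule image_cong[OF refl]) (auto simp: Mat_col)
  finally show ?thesis by simp
qed

lemma part1: "edim fscale (birec_closure p q A) = edim mscale (shift_alg p q V)"
proof -
  have van: "\<And>r c. r \<notin> Mpq p q \<times> Mpq p q \<or> c \<notin> Mpq p q \<Longrightarrow> Mat p q A r c = 0"
    by (auto simp: Mat_def split: if_splits)
  have "edim fscale (birec_closure p q A) = edim fscale (Mat p q A ` (Mpq p q \<times> Mpq p q))"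
    unfolding birec_eq by (rule fs.edim_span)
  also have "\<dots> = edim fscale ((\<lambda>c r. Mat p q A r c) ` Mpq p q)"
    by (rule rank_eq[OF van])
  also have "\<dots> = edim fscale (Lmap p q A ` Gs)" unfolding cols_eq ..
  also have "\<dots> = edim mscale Gs"
    using edim_transfer[OF Lmap_hom vs_mscale vs_fscale Lmap_inj] by simp
  also have "\<dots> = edim mscale (shift_alg p q V)"
    unfolding shift_alg_eq by (rule ms.edim_span[symmetric])
  finally show ?thesis .
qed

end


definition Nmat :: "nat \<Rightarrow> nat \<Rightarrow> (pr \<Rightarrow> 'k::field) \<Rightarrow> pr \<Rightarrow> pr \<Rightarrow> 'k" where
  "Nmat p q b = (\<lambda>X U. if X \<in> Mpq p q \<and> U \<in> Mpq p q then b (fst X @ fst U, snd X @ snd U) else 0)"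

context
  fixes p q :: nat and A :: "pr \<Rightarrow> 'k::field"
  assumes hA: "\<forall>x. x \<notin> Mpq p q \<longrightarrow> A x = 0"
begin

abbreviation "V2 \<equiv> rec_closure p q A"
abbreviation "Bg \<equiv> {lshift S' T' (rshift S T A) | S T S' T'. (S, T) \<in> Mpq p q \<and> (S', T') \<in> Mpq p q}"

lemma part2: "edim fscale V2 \<le> edim fscale (birec_closure p q A)"
proof -
  have sub: "(\<lambda>(S,T). rshift S T A) ` Mpq p q \<subseteq> fs.span Bg"
  proof
    fix g assume "g \<in> (\<lambda>(S,T). rshift S T A) ` Mpq p q"
    then obtain S T where st: "(S,T) \<in> Mpq p q" "g = rshift S T A" by auto
    have "g = lshift [] [] (rshift S T A)" using st(2) by (simp add: lshift_Nil)
    then have "g \<in> Bg" using st(1) Mpq_Nil by blast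
    then show "g \<in> fs.span Bg" by (rule fs.span_base)
  qed
  have "edim fscale V2 = edim fscale ((\<lambda>(S,T). rshift S T A) ` Mpq p q)"
    unfolding rec_closure_eq by (rule fs.edim_span)
  also have "\<dots> \<le> edim fscale Bg" by (rule fs.edim_mono[OF sub])
  also have "\<dots> = edim fscale (birec_closure p q A)"
    unfolding birec_closure_def by (rule fs.edim_span[symmetric])
  finally show ?thesis .
qed

lemma Nmat_row: assumes "b \<in> V2" "(X1,X2) \<in> Mpq p q"
  shows "Nmat p q b (X1,X2) = lshift (rev X1) (rev X2) b"
proof (rule ext)
  fix U :: pr
  obtain U1 U2 where U: "U = (U1,U2)" by (metis prod.exhaust)
  show "Nmat p q b (X1,X2) U = lshift (rev X1) (rev X2) b U"
  proof (cases "U \<in> Mpq p q")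
    case True then show ?thesis using assms by (simp add: Nmat_def U lshift_apply)
  next
    case False
    then have "(X1@U1, X2@U2) \<notin> Mpq p q" using Mpq_appD2[of X1 U1 X2 U2 p q] assms(2) U by blast
    then show ?thesis using False V_van[OF hA assms(1)] by (simp add: Nmat_def U lshift_apply)
  qed
qed

lemma Nmat_col: assumes "b \<in> V2" "(U1,U2) \<in> Mpq p q"
  shows "(\<lambda>X. Nmat p q b X (U1,U2)) = rshift U1 U2 b"
proof (rule ext)
  fix X :: pr
  obtain X1 X2 where X: "X = (X1,X2)" by (metis prod.exhaust)
  show "Nmat p q b X (U1,U2) = rshift U1 U2 b X"
  proof (cases "X \<in> Mpq p q")
    case True then show ?thesis using assms by (simp add: Nmat_def X rshift_apply)
  next
    case False
    then have "(X1@U1, X2@U2) \<notin> Mpq p q" using Mpq_appD1[of X1 U1 X2 U2 p q] assms(2) X by blast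
    then show ?thesis using False V_van[OF hA assms(1)] by (simp add: Nmat_def X rshift_apply)
  qed
qed

lemma rows_bound: assumes "b \<in> V2" "edim fscale V2 \<le> enat k"
  shows "\<exists>E. finite E \<and> card E \<le> k \<and> Nmat p q b ` Mpq p q \<subseteq> fs.span E"
proof -
  have van: "\<And>r c. r \<notin> Mpq p q \<or> c \<notin> Mpq p q \<Longrightarrow> Nmat p q b r c = 0"
    by (auto simp: Nmat_def)
  have cols: "(\<lambda>c r. Nmat p q b r c) ` Mpq p q \<subseteq> V2"
    using Nmat_col[OF assms(1)] V_rshift[OF hA assms(1)] by auto
  have "edim fscale (Nmat p q b ` Mpq p q) = edim fscale ((\<lambda>c r. Nmat p q b r c) ` Mpq p q)"
    by (rule rank_eq[OF van])
  also have "\<dots> \<le> edim fscale V2" using cols fs.span_superset by (intro fs.edim_mono) blast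
  finally have "edim fscale (Nmat p q b ` Mpq p q) \<le> enat k" using assms(2) by (rule order_trans)
  then obtain D where "finite D" "card D \<le> k" "Nmat p q b ` Mpq p q \<subseteq> fs.span D"
    by (rule fs.edim_le_obtain)
  then show ?thesis by blast
qed

lemma part3: "edim fscale (birec_closure p q A) \<le> edim fscale V2 * edim fscale V2"
proof (cases "edim fscale V2")
  case infinity
  have "edim fscale V2 * edim fscale V2 = \<infinity>" using infinity by simp
  then show ?thesis by simp
next
  case (enat k)
  then have ek: "edim fscale V2 \<le> enat k" by simp
  obtain D where D: "D \<subseteq> V2" "finite D" "card D \<le> k" "V2 \<subseteq> fs.span D" "fs.independent D"
    by (rule fs.edim_le_obtain[OF ek])
  have "\<forall>b\<in>D. \<exists>E. finite E \<and> card E \<le> k \<and> Nmat p q b ` Mpq p q \<subseteq> fs.span E"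
    using rows_bound D(1) ek by blast
  from bchoice[OF this] obtain E where E0: "\<forall>b\<in>D. finite (E b) \<and> card (E b) \<le> k \<and> Nmat p q b ` Mpq p q \<subseteq> fs.span (E b)"
    by blast
  have E: "\<And>b. b \<in> D \<Longrightarrow> finite (E b) \<and> card (E b) \<le> k \<and> Nmat p q b ` Mpq p q \<subseteq> fs.span (E b)"
    using E0 by blast
  define U where "U = (\<Union>b\<in>D. E b)"
  have finU: "finite U" unfolding U_def using D(2) E by blast
  have "card U \<le> (\<Sum>b\<in>D. card (E b))" unfolding U_def using D(2) by (rule card_UN_le)
  also have "\<dots> \<le> card D * k" using E sum_bounded_above[of D "\<lambda>b. card (E b)" k] by auto
  also have "\<dots> \<le> k * k" using D(3) by simp
  finally have cardU: "card U \<le> k * k" .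
  have Bsub: "Bg \<subseteq> fs.span U"
  proof
    fix g assume "g \<in> Bg"
    then obtain S T S' T' where st: "(S, T) \<in> Mpq p q" "(S', T') \<in> Mpq p q" "g = lshift S' T' (rshift S T A)"
      by blast
    interpret lh: module_hom fscale fscale "lshift S' T' :: (pr \<Rightarrow> 'k) \<Rightarrow> _" by (rule lshift_hom)
    have r: "(rev S', rev T') \<in> Mpq p q" using st(2) Mpq_rev by blast
    have "lshift S' T' ` D \<subseteq> fs.span U"
    proof
      fix h assume "h \<in> lshift S' T' ` D"
      then obtain b where b: "b \<in> D" "h = lshift S' T' b" by blast
      have "h = Nmat p q b (rev S', rev T')" using Nmat_row[OF _ r] D(1) b by auto
      then have "h \<in> fs.span (E b)" using E[OF b(1)] r by blast
      also have "\<dots> \<subseteq> fs.span U" unfolding U_def using b(1) by (intro fs.span_mono) blast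
      finally show "h \<in> fs.span U" .
    qed
    then have "fs.span (lshift S' T' ` D) \<subseteq> fs.span U"
      by (rule fs.span_minimal) (rule fs.subspace_span)
    moreover have "rshift S T A \<in> fs.span D" using G_in_V[OF hA st(1)] D(4) by blast
    then have "g \<in> lshift S' T' ` fs.span D" using st(3) by blast
    then have "g \<in> fs.span (lshift S' T' ` D)" unfolding lh.span_image .
    ultimately show "g \<in> fs.span U" by blast
  qed
  have "edim fscale (birec_closure p q A) = edim fscale Bg"
    unfolding birec_closure_def by (rule fs.edim_span)
  also have "\<dots> \<le> enat (card U)" by (rule fs.edim_le_card[OF Bsub finU])
  also have "\<dots> \<le> enat (k * k)" using cardU by simp
  also have "\<dots> = edim fscale V2 * edim fscale V2" using enat by simp
  finally show ?thesis .
qed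

end

theorem mainTheorem14:
  fixes p q :: nat and A :: "nat list \<times> nat list \<Rightarrow> 'k::field"
  assumes "\<forall>x. x \<notin> Mpq p q \<longrightarrow> A x = 0"
  shows "edim fscale (birec_closure p q A) = edim mscale (shift_alg p q (rec_closure p q A))
       \<and> edim fscale (rec_closure p q A) \<le> edim fscale (birec_closure p q A)
       \<and> edim fscale (birec_closure p q A) \<le> edim fscale (rec_closure p q A) * edim fscale (rec_closure p q A)"
  using part1[OF assms] part2[OF assms] part3[OF assms] by blast

end
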